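(* Let $0<\alpha<2$, $\sigma>0$, and let $X=(X_i)_{1\le i\le n}$ be i.i.d. symmetric $\alpha$-stable random variables with distribution $\mathrm{Stab}_\alpha(0,\sigma)$. Let $A$ be an $n\times n$ (real symmetric) positive definite matrix. Then $$\langle X,AX\rangle\stackrel{d}{=}\|A^{1/2}G\|_\alpha^2\,S,$$ where $G$ is a standard Gaussian vector $N(0,I_n)$ independent of $S$, a positive $\alpha/2$-stable random variable with distribution $\mathrm{Stab}_{\frac\alpha2}(1,2\sigma^2v_{\frac\alpha2}^{-\frac2\alpha})$.
   Context: For $\sigma>0$, $0<a<2$, $\mathrm{Stab}_a(0,\sigma)$ is the law of a real random variable $Y$ with $\mathbb{E}\exp(itY)=\exp(-\sigma^a|t|^a)$ for all $t\in\mathbb{R}$. For $0<a<1$, $\mathrm{Stab}_a(1,\sigma)$ is the law supported on $\mathbb{R}_+$ with Laplace transform $\mathbb{E}\exp(-tY)=\exp(-\sigma^at^av_a)$ for $t\ge0$, where $v_a=\frac2\pi\sin(\frac{\pi a}2)\Gamma(1-a)\Gamma(a)$. For $x\in\mathbb{R}^n$, $\|x\|_\alpha=(\sum_i|x_i|^\alpha)^{1/\alpha}$; $\stackrel{d}{=}$ is equality in distribution. *)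

theory Defs
  imports "HOL-Probability.Probability"
begin

definition is_stab_sym :: "real \<Rightarrow> real \<Rightarrow> real measure \<Rightarrow> bool" where
  "is_stab_sym a \<sigma> \<mu> \<longleftrightarrow> real_distribution \<mu> \<and>
     (\<forall>t::real. char \<mu> t = complex_of_real (exp (- (\<sigma> powr a) * (\<bar>t\<bar> powr a))))"

definition v_const :: "real \<Rightarrow> real" where
  "v_const a = 2 / pi * sin (pi * a / 2) * Gamma (1 - a) * Gamma a"

definition is_stab_pos :: "real \<Rightarrow> real \<Rightarrow> real measure \<Rightarrow> bool" where
  "is_stab_pos a \<sigma> \<mu> \<longleftrightarrow> real_distribution \<mu> \<and> measure \<mu> {..<0} = 0 \<and>
     (\<forall>t::real\<ge>0. (LINT x|\<mu>. exp (- t * x)) = exp (- (\<sigma> powr a) * (t powr a) * v_const a))"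

definition lpnorm :: "real \<Rightarrow> real^'n \<Rightarrow> real" where
  "lpnorm p x = (\<Sum>i\<in>UNIV. \<bar>x $ i\<bar> powr p) powr (1 / p)"

definition sym_matrix :: "real^'n^'n \<Rightarrow> bool" where
  "sym_matrix A \<longleftrightarrow> transpose A = A"

definition pos_def_matrix :: "real^'n^'n \<Rightarrow> bool" where
  "pos_def_matrix A \<longleftrightarrow> sym_matrix A \<and> (\<forall>x. x \<noteq> 0 \<longrightarrow> x \<bullet> (A *v x) > 0)"

definition pos_semidef_matrix :: "real^'n^'n \<Rightarrow> bool" where
  "pos_semidef_matrix A \<longleftrightarrow> sym_matrix A \<and> (\<forall>x. x \<bullet> (A *v x) \<ge> 0)"

text \<open>The (unique) symmetric positive semidefinite square root A^(1/2).\<close>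
definition matrix_sqrt :: "real^'n^'n \<Rightarrow> real^'n^'n" where
  "matrix_sqrt A = (THE B. pos_semidef_matrix B \<and> B ** B = A)"

end

theory Submission
  imports Defs
begin


lemma char_lincomb:
  fixes Z :: "'n::finite \<Rightarrow> 'a \<Rightarrow> real"
  assumes P: "prob_space P" and ind: "prob_space.indep_vars P (\<lambda>_. borel) Z UNIV"
  shows "(CLINT \<omega>|P. iexp (t * (\<Sum>i\<in>UNIV. u i * Z i \<omega>))) = (\<Prod>i\<in>UNIV. char (distr P borel (Z i)) (t * u i))"
proof -
  interpret prob_space P by fact
  have [measurable]: "Z i \<in> borel_measurable P" for i
    using ind unfolding indep_vars_def by auto
  have ind2: "indep_vars (\<lambda>_. borel) (\<lambda>i \<omega>. u i * Z i \<omega>) UNIV"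
    by (rule indep_vars_compose2[OF ind]) auto
  have "(CLINT \<omega>|P. iexp (t * (\<Sum>i\<in>UNIV. u i * Z i \<omega>))) = char (distr P borel (\<lambda>\<omega>. \<Sum>i\<in>UNIV. u i * Z i \<omega>)) t"
    by (simp add: char_def integral_distr)
  also have "\<dots> = (\<Prod>i\<in>UNIV. char (distr P borel (\<lambda>\<omega>. u i * Z i \<omega>)) t)"
    by (rule char_distr_sum[OF ind2])
  also have "\<dots> = (\<Prod>i\<in>UNIV. char (distr P borel (Z i)) (t * u i))"
    by (intro prod.cong refl) (simp add: char_def integral_distr mult.assoc)
  finally show ?thesis .
qed



lemma char_distr_lborel: "char (distr P borel Z) = char (distr P lborel Z)"
  by (subst distr_cong[of P P lborel borel Z Z]) auto

lemma gauss_char: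
  fixes G :: "'b \<Rightarrow> real^'n"
  assumes P: "prob_space N" and ind: "prob_space.indep_vars N (\<lambda>_. borel) (\<lambda>i \<omega>. G \<omega> $ i) UNIV"
    and d: "\<And>i. distributed N lborel (\<lambda>\<omega>. G \<omega> $ i) std_normal_density"
  shows "(CLINT \<omega>|N. iexp (t * (\<Sum>i\<in>UNIV. y $ i * G \<omega> $ i))) = complex_of_real (exp (- (t^2 * (y \<bullet> y)) / 2))"
proof -
  have "(CLINT \<omega>|N. iexp (t * (\<Sum>i\<in>UNIV. y $ i * G \<omega> $ i))) = (\<Prod>i\<in>UNIV. char (distr N borel (\<lambda>\<omega>. G \<omega> $ i)) (t * y $ i))"
    by (rule char_lincomb[OF P ind])
  also have "\<dots> = (\<Prod>i\<in>UNIV. complex_of_real (exp (- ((t * y $ i)^2) / 2)))"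
    using d by (simp add: char_distr_lborel distributed_def char_std_normal_distribution)
  also have "\<dots> = complex_of_real (exp (\<Sum>i\<in>UNIV. - ((t * y $ i)^2) / 2))"
    by (simp add: exp_sum of_real_prod)
  also have "(\<Sum>i\<in>UNIV. - ((t * y $ i)^2) / 2) = - (t^2 * (y \<bullet> y)) / 2"
    by (simp add: inner_vec_def sum_divide_distrib sum_distrib_left power2_eq_square sum_negf algebra_simps)
  finally show ?thesis .
qed

lemma stab_char:
  fixes X :: "'a \<Rightarrow> real^'n"
  assumes P: "prob_space M" and ind: "prob_space.indep_vars M (\<lambda>_. borel) (\<lambda>i \<omega>. X \<omega> $ i) UNIV"
    and d: "\<And>i. is_stab_sym \<alpha> \<sigma> (distr M borel (\<lambda>\<omega>. X \<omega> $ i))"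
  shows "(CLINT \<omega>|M. iexp (t * (\<Sum>i\<in>UNIV. u $ i * X \<omega> $ i))) = complex_of_real (exp (- (\<sigma> powr \<alpha>) * (\<bar>t\<bar> powr \<alpha>) * (\<Sum>i\<in>UNIV. \<bar>u $ i\<bar> powr \<alpha>)))"
proof -
  have "(CLINT \<omega>|M. iexp (t * (\<Sum>i\<in>UNIV. u $ i * X \<omega> $ i))) = (\<Prod>i\<in>UNIV. char (distr M borel (\<lambda>\<omega>. X \<omega> $ i)) (t * u $ i))"
    by (rule char_lincomb[OF P ind])
  also have "\<dots> = (\<Prod>i\<in>UNIV. complex_of_real (exp (- (\<sigma> powr \<alpha>) * (\<bar>t * u $ i\<bar> powr \<alpha>))))"
    using d by (simp add: is_stab_sym_def)
  also have "\<dots> = complex_of_real (exp (\<Sum>i\<in>UNIV. - (\<sigma> powr \<alpha>) * (\<bar>t * u $ i\<bar> powr \<alpha>)))"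
    by (simp add: exp_sum of_real_prod)
  also have "(\<Sum>i\<in>UNIV. - (\<sigma> powr \<alpha>) * (\<bar>t * u $ i\<bar> powr \<alpha>)) = - (\<sigma> powr \<alpha>) * (\<bar>t\<bar> powr \<alpha>) * (\<Sum>i\<in>UNIV. \<bar>u $ i\<bar> powr \<alpha>)"
    by (simp add: abs_mult powr_mult sum_distrib_left algebra_simps)
  finally show ?thesis .
qed



lemma iexp_split: "iexp x = complex_of_real (cos x) + \<i> * complex_of_real (sin x)"
  by (simp add: cis_conv_exp[symmetric] complex_eq_iff)

lemma cont_fun_eq:
  fixes \<mu> \<nu> :: "real measure" and f :: "real \<Rightarrow> real"
  assumes "real_distribution \<mu>" "real_distribution \<nu>"
    and Ae1: "AE y in \<mu>. y \<in> {0..1}" and Ae2: "AE y in \<nu>. y \<in> {0..1}"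
    and mom: "\<And>k::nat. (LINT y|\<mu>. y ^ k) = (LINT y|\<nu>. y ^ k)"
    and f: "continuous_on UNIV f" and fb: "\<And>x. \<bar>f x\<bar> \<le> 1"
  shows "(LINT y|\<mu>. f y) = (LINT y|\<nu>. f y)"
proof -
  interpret m: real_distribution \<mu> by fact
  interpret n: real_distribution \<nu> by fact
  have fm[measurable]: "f \<in> borel_measurable borel"
    using f by (rule borel_measurable_continuous_onI)
  have intf1: "integrable \<mu> f" by (rule m.integrable_const_bound[where B=1]) (auto simp: fb)
  have intf2: "integrable \<nu> f" by (rule n.integrable_const_bound[where B=1]) (auto simp: fb)
  have powi1: "integrable \<mu> (\<lambda>y. y ^ k)" for k
    by (rule m.integrable_const_bound[where B=1]) (use Ae1 in \<open>auto simp: power_le_one\<close>)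
  have powi2: "integrable \<nu> (\<lambda>y. y ^ k)" for k
    by (rule n.integrable_const_bound[where B=1]) (use Ae2 in \<open>auto simp: power_le_one\<close>)
  have key: "\<bar>(LINT y|\<mu>. f y) - (LINT y|\<nu>. f y)\<bar> \<le> 2 * e" if e: "0 < e" for e
  proof -
    obtain g where g: "real_polynomial_function g" and ge: "\<And>x. x \<in> {0..1} \<Longrightarrow> \<bar>f x - g x\<bar> < e"
      using Stone_Weierstrass_real_polynomial_function[of "{0..1::real}" f e] f e
      by (auto intro: continuous_on_subset)
    obtain a n where gdef: "g = (\<lambda>x. \<Sum>i\<le>n. a i * x^i)"
      using real_polynomial_function_imp_sum[OF g] by auto
    have int1: "integrable \<mu> g" unfolding gdef using powi1 by auto
    have int2: "integrable \<nu> g" unfolding gdef using powi2 by auto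
    have eq: "(LINT y|\<mu>. g y) = (LINT y|\<nu>. g y)"
      unfolding gdef using powi1 powi2 mom by (simp add: integral_sum integrable_mult_right)
    have d1: "\<bar>(LINT y|\<mu>. f y) - (LINT y|\<mu>. g y)\<bar> \<le> e"
    proof -
      have "\<bar>(LINT y|\<mu>. f y) - (LINT y|\<mu>. g y)\<bar> = \<bar>LINT y|\<mu>. f y - g y\<bar>"
        using intf1 int1 by simp
      also have "\<dots> \<le> LINT y|\<mu>. \<bar>f y - g y\<bar>" by (rule integral_abs_bound)
      also have "\<dots> \<le> LINT y|\<mu>. e"
      proof (rule integral_mono_AE)
        show "AE y in \<mu>. \<bar>f y - g y\<bar> \<le> e" using Ae1
          by eventually_elim (use ge in \<open>auto intro: less_imp_le\<close>)
      qed (use intf1 int1 in auto)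
      finally show ?thesis using m.prob_space by simp
    qed
    have d2: "\<bar>(LINT y|\<nu>. f y) - (LINT y|\<nu>. g y)\<bar> \<le> e"
    proof -
      have "\<bar>(LINT y|\<nu>. f y) - (LINT y|\<nu>. g y)\<bar> = \<bar>LINT y|\<nu>. f y - g y\<bar>"
        using intf2 int2 by simp
      also have "\<dots> \<le> LINT y|\<nu>. \<bar>f y - g y\<bar>" by (rule integral_abs_bound)
      also have "\<dots> \<le> LINT y|\<nu>. e"
      proof (rule integral_mono_AE)
        show "AE y in \<nu>. \<bar>f y - g y\<bar> \<le> e" using Ae2
          by eventually_elim (use ge in \<open>auto intro: less_imp_le\<close>)
      qed (use intf2 int2 in auto)
      finally show ?thesis using n.prob_space by simp
    qed
    show ?thesis using d1 d2 eq by linarith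
  qed
  show ?thesis
  proof (rule ccontr)
    assume ne: "(LINT y|\<mu>. f y) \<noteq> (LINT y|\<nu>. f y)"
    define d where "d = \<bar>(LINT y|\<mu>. f y) - (LINT y|\<nu>. f y)\<bar>"
    have "d > 0" using ne unfolding d_def by simp
    then have "d \<le> 2 * (d/4)" using key[of "d/4"] unfolding d_def by simp
    with \<open>d > 0\<close> show False by simp
  qed
qed

lemma laplace_unique:
  fixes \<mu> \<nu> :: "real measure"
  assumes m: "real_distribution \<mu>" and n: "real_distribution \<nu>"
    and A1: "AE x in \<mu>. 0 \<le> x" and A2: "AE x in \<nu>. 0 \<le> x"
    and L: "\<And>k::nat. (LINT x|\<mu>. exp (- real k * x)) = (LINT x|\<nu>. exp (- real k * x))"
  shows "\<mu> = \<nu>"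
proof -
  interpret m: real_distribution \<mu> by fact
  interpret n: real_distribution \<nu> by fact
  define e where "e = (\<lambda>x::real. exp (- x))"
  have em[measurable]: "e \<in> borel_measurable borel" unfolding e_def by simp
  have rd1: "real_distribution (distr \<mu> borel e)"
    by (rule real_distribution.intro, rule m.prob_space_distr) (auto simp: real_distribution_axioms_def)
  have rd2: "real_distribution (distr \<nu> borel e)"
    by (rule real_distribution.intro, rule n.prob_space_distr) (auto simp: real_distribution_axioms_def)
  have Ae1: "AE y in distr \<mu> borel e. y \<in> {0..1}"
    by (subst AE_distr_iff) (use A1 in \<open>auto simp: e_def elim!: eventually_mono\<close>)
  have Ae2: "AE y in distr \<nu> borel e. y \<in> {0..1}"
    by (subst AE_distr_iff) (use A2 in \<open>auto simp: e_def elim!: eventually_mono\<close>)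
  have mom: "(LINT y|distr \<mu> borel e. y ^ k) = (LINT y|distr \<nu> borel e. y ^ k)" for k :: nat
  proof -
    have "(\<lambda>x. e x ^ k) = (\<lambda>x. exp (- real k * x))"
      by (auto simp: e_def exp_of_nat_mult[symmetric])
    then show ?thesis using L[of k] by (simp add: integral_distr)
  qed
  have cs: "(LINT y|distr \<mu> borel e. f y) = (LINT y|distr \<nu> borel e. f y)"
    if "f = (\<lambda>y. cos (t * y)) \<or> f = (\<lambda>y. sin (t * y))" for f t
    by (rule cont_fun_eq[OF rd1 rd2 Ae1 Ae2 mom]) (use that in \<open>auto intro!: continuous_intros\<close>)
  interpret r1: real_distribution "distr \<mu> borel e" by (rule rd1)
  interpret r2: real_distribution "distr \<nu> borel e" by (rule rd2)
  have ch: "char (distr \<mu> borel e) = char (distr \<nu> borel e)"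
  proof
    fix t
    have i1: "integrable (distr \<mu> borel e) (\<lambda>y. f y)" if "f = (\<lambda>y. cos (t * y)) \<or> f = (\<lambda>y. sin (t * y))" for f :: "real \<Rightarrow> real"
      by (rule r1.integrable_const_bound[where B=1]) (use that in auto)
    have i2: "integrable (distr \<nu> borel e) (\<lambda>y. f y)" if "f = (\<lambda>y. cos (t * y)) \<or> f = (\<lambda>y. sin (t * y))" for f :: "real \<Rightarrow> real"
      by (rule r2.integrable_const_bound[where B=1]) (use that in auto)
    show "char (distr \<mu> borel e) t = char (distr \<nu> borel e) t"
      unfolding char_def iexp_split
      using i1[of "\<lambda>y. cos (t * y)"] i1[of "\<lambda>y. sin (t * y)"] i2[of "\<lambda>y. cos (t * y)"] i2[of "\<lambda>y. sin (t * y)"]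
        cs[of "\<lambda>y. cos (t * y)" t] cs[of "\<lambda>y. sin (t * y)" t]
      by (simp add: integrable_mult_right del: of_real_mult)
  qed
  have eq: "distr \<mu> borel e = distr \<nu> borel e"
    by (rule Levy_uniqueness[OF rd1 rd2 ch])
  have "\<mu> = distr (distr \<mu> borel e) borel (\<lambda>y. - ln y)"
    by (subst distr_distr) (auto simp: e_def comp_def distr_id2)
  also have "\<dots> = distr (distr \<nu> borel e) borel (\<lambda>y. - ln y)" using eq by simp
  also have "\<dots> = \<nu>"
    by (subst distr_distr) (auto simp: e_def comp_def distr_id2)
  finally show ?thesis .
qed



lemma arith_powr:
  fixes \<alpha> \<sigma> v s L \<Sigma> :: real
  assumes "0 < \<alpha>" "0 < \<sigma>" "0 < v" "0 \<le> s" "0 \<le> L" "L powr \<alpha> = \<Sigma>"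
  shows "(2 * \<sigma>\<^sup>2 * v powr (- 2 / \<alpha>)) powr (\<alpha>/2) * ((s * L\<^sup>2) powr (\<alpha>/2)) * v
       = \<sigma> powr \<alpha> * (sqrt (2 * s) powr \<alpha>) * \<Sigma>"
proof -
  have e1: "(v powr (- 2 / \<alpha>)) powr (\<alpha>/2) = v powr (-1)"
    using assms by (simp add: powr_powr)
  have sq: "x\<^sup>2 = x powr 2" if "0 \<le> x" for x :: real
    using that by (cases "x = 0") (auto simp: powr_numeral)
  have e2: "(x\<^sup>2) powr (\<alpha>/2) = x powr \<alpha>" if "0 \<le> x" for x :: real
  proof -
    have "(x\<^sup>2) powr (\<alpha>/2) = (x powr 2) powr (\<alpha>/2)" using sq[OF that] by simp
    also have "\<dots> = x powr (2 * (\<alpha>/2))" by (rule powr_powr)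
    finally show ?thesis by simp
  qed
  have e4: "sqrt (2 * s) powr \<alpha> = 2 powr (\<alpha>/2) * s powr (\<alpha>/2)"
  proof -
    have "sqrt (2 * s) = (2 * s) powr (1/2)" using assms by (simp add: powr_half_sqrt)
    then have "sqrt (2 * s) powr \<alpha> = (2 * s) powr (1/2 * \<alpha>)" by (simp add: powr_powr)
    also have "\<dots> = 2 powr (\<alpha>/2) * s powr (\<alpha>/2)" using assms by (simp add: powr_mult)
    finally show ?thesis .
  qed
  have a1: "(2 * \<sigma>\<^sup>2 * v powr (- 2 / \<alpha>)) powr (\<alpha>/2) = 2 powr (\<alpha>/2) * (\<sigma>\<^sup>2) powr (\<alpha>/2) * (v powr (- 2 / \<alpha>)) powr (\<alpha>/2)"
    using assms by (simp add: powr_mult)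
  have a2: "(s * L\<^sup>2) powr (\<alpha>/2) = s powr (\<alpha>/2) * (L\<^sup>2) powr (\<alpha>/2)"
    using assms by (simp add: powr_mult)
  have vv: "v powr (-1) * v = 1" using assms by (simp add: powr_minus)
  show ?thesis unfolding a1 a2 e1 e2[OF \<open>0 \<le> L\<close>] e2[OF less_imp_le[OF assms(2)]] e4 using assms(2) assms(6) vv
    by (simp add: algebra_simps)
qed



lemma quad_zero:
  fixes c D :: real
  assumes h: "\<And>t. 2 * t * c \<le> t\<^sup>2 * D" and c: "c \<ge> 0"
  shows "c = 0"
proof (rule ccontr)
  assume "c \<noteq> 0" then have cp: "c > 0" using c by simp
  define t where "t = c / (\<bar>D\<bar> + 1)"
  have tp: "t > 0" unfolding t_def using cp by (simp add: add_pos_nonneg)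
  have "2 * t * c \<le> t\<^sup>2 * D" by (rule h)
  then have "2 * c \<le> t * D" using tp by (simp add: power2_eq_square mult_le_cancel_left_pos mult.assoc mult.left_commute)
  also have "t * D \<le> t * \<bar>D\<bar>" using tp by (simp add: mult_left_mono)
  also have "t * \<bar>D\<bar> < c" unfolding t_def using cp by (simp add: field_simps)
  finally show False using cp by simp
qed

lemma sym_inner': assumes "transpose B = (B::real^'n^'n)"
  shows "(B *v x) \<bullet> y = x \<bullet> (B *v y)"
proof -
  have "B *v x = x v* B" using transpose_matrix_vector[of B x] assms by simp
  then show ?thesis by (simp add: dot_lmul_matrix)
qed

lemma test_cont: "continuous_on S (\<lambda>x::real^'n. x \<bullet> (A *v x))"
  by (intro continuous_intros)

lemma test_dimfull: "independent (V :: (real^'n) set) \<Longrightarrow> card V = DIM(real^'n) \<Longrightarrow> span V = UNIV"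
  by (metis dim_eq_card_independent dim_eq_full)



definition ONE :: "real^'n^'n \<Rightarrow> (real^'n) set \<Rightarrow> bool" where
  "ONE A V \<longleftrightarrow> finite V \<and> pairwise orthogonal V \<and> (\<forall>v\<in>V. norm v = 1 \<and> A *v v = (v \<bullet> (A *v v)) *\<^sub>R v)"

lemma ONE_indep: "ONE A V \<Longrightarrow> independent V"
  unfolding ONE_def by (rule pairwise_orthogonal_independent) auto

lemma spec_step:
  fixes A :: "real^'n^'n"
  assumes As: "transpose A = A" and V: "ONE A V" and cV: "card V < DIM(real^'n)"
  shows "\<exists>u. u \<notin> V \<and> ONE A (insert u V)"
proof -
  have fin: "finite V" and po: "pairwise orthogonal V" and nv: "\<And>v. v \<in> V \<Longrightarrow> norm v = 1"
    and ev: "\<And>v. v \<in> V \<Longrightarrow> A *v v = (v \<bullet> (A *v v)) *\<^sub>R v"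
    using V unfolding ONE_def by auto
  have sy: "(A *v x) \<bullet> y = x \<bullet> (A *v y)" for x y by (rule sym_inner'[OF As])
  define f where "f = (\<lambda>x::real^'n. x \<bullet> (A *v x))"
  define W where "W = {x::real^'n. \<forall>v\<in>V. v \<bullet> x = 0}"
  define K where "K = sphere (0::real^'n) 1 \<inter> W"
  have dimV: "dim V < DIM(real^'n)" using cV dim_eq_card_independent[OF ONE_indep[OF V]] by simp
  obtain x0 where x0: "x0 \<noteq> 0" "\<And>y. y \<in> span V \<Longrightarrow> orthogonal x0 y"
    using orthogonal_to_subspace_exists[OF dimV] by blast
  have "x0 /\<^sub>R norm x0 \<in> K"
    using x0 unfolding K_def W_def by (auto simp: orthogonal_def span_base inner_commute)
  then have Kne: "K \<noteq> {}" by auto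
  have Wc: "W = (\<Inter>v\<in>V. {x. v \<bullet> x = 0})" unfolding W_def by auto
  have Kc: "compact K" unfolding K_def Wc
    by (intro compact_Int_closed compact_sphere closed_INT) (auto intro: closed_hyperplane)
  have fc: "continuous_on K f" unfolding f_def by (intro continuous_intros)
  obtain u where uK: "u \<in> K" and umax: "\<And>y. y \<in> K \<Longrightarrow> f y \<le> f u"
    using continuous_attains_sup[OF Kc Kne fc] by blast
  define l where "l = f u"
  have uW: "u \<in> W" and un: "norm u = 1" using uK unfolding K_def by auto
  have uu: "u \<bullet> u = 1" using un by (simp add: norm_eq_sqrt_inner)
  have Wadd: "a *\<^sub>R x + b *\<^sub>R y \<in> W" if "x \<in> W" "y \<in> W" for a b x y
    using that unfolding W_def by (simp add: inner_add_right)
  have fle: "f x \<le> l * (x \<bullet> x)" if xW: "x \<in> W" for x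
  proof (cases "x = 0")
    case True then show ?thesis by (simp add: f_def)
  next
    case False
    have "x /\<^sub>R norm x \<in> K" using xW False unfolding K_def W_def by auto
    then have "f (x /\<^sub>R norm x) \<le> l" using umax unfolding l_def by blast
    moreover have "f (x /\<^sub>R norm x) = f x / (norm x)\<^sup>2"
    proof -
      have "f (c *\<^sub>R x) = c * c * f x" for c
        unfolding f_def by (simp add: matrix_vector_mult_scaleR)
      then have "f (x /\<^sub>R norm x) = inverse (norm x) * inverse (norm x) * f x" by simp
      then show ?thesis by (simp add: power2_eq_square divide_inverse mult.commute)
    qed
    moreover have "(norm x)\<^sup>2 = x \<bullet> x" by (simp add: power2_norm_eq_inner)
    ultimately show ?thesis using False by (simp add: divide_le_eq mult.commute)
  qed
  have AuW: "A *v u \<in> W"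
    unfolding W_def
  proof (intro CollectI ballI)
    fix v assume v: "v \<in> V"
    have "v \<bullet> (A *v u) = (A *v v) \<bullet> u" by (simp add: sy)
    also have "\<dots> = (v \<bullet> (A *v v)) * (v \<bullet> u)" by (subst ev[OF v]) (simp only: inner_scaleR_left)
    also have "v \<bullet> u = 0" using uW v unfolding W_def by auto
    finally show "v \<bullet> (A *v u) = 0" by (simp only: mult_zero_right)
  qed
  define y where "y = A *v u - l *\<^sub>R u"
  have yW: "y \<in> W" unfolding y_def using Wadd[OF AuW uW, of 1 "-l"] by simp
  have yu: "y \<bullet> u = 0" unfolding y_def l_def f_def using uu by (simp add: inner_diff_left inner_diff_right inner_commute)
  define c where "c = y \<bullet> (A *v u)"
  have cyy: "c = y \<bullet> y" unfolding c_def
  proof -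
    have "y \<bullet> y = y \<bullet> (A *v u) - l * (y \<bullet> u)" by (simp add: y_def inner_diff_right)
    then show "y \<bullet> (A *v u) = y \<bullet> y" using yu by simp
  qed
  have ineq: "2 * t * c \<le> t\<^sup>2 * (l * (y \<bullet> y) - f y)" for t
  proof -
    have xt: "u + t *\<^sub>R y \<in> W" using Wadd[OF uW yW, of 1 t] by simp
    have "f (u + t *\<^sub>R y) = l + 2 * t * c + t\<^sup>2 * f y"
      unfolding f_def l_def c_def
      by (simp add: matrix_vector_right_distrib matrix_vector_mult_scaleR inner_add_left inner_add_right
            sy[of u y] sy[of y u] power2_eq_square algebra_simps inner_commute[of u "A *v y"])
    moreover have "(u + t *\<^sub>R y) \<bullet> (u + t *\<^sub>R y) = 1 + t\<^sup>2 * (y \<bullet> y)"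
      using uu yu by (simp add: inner_add_left inner_add_right inner_commute[of u y] power2_eq_square)
    ultimately show ?thesis using fle[OF xt] by (simp add: algebra_simps)
  qed
  have "c = 0" by (rule quad_zero[OF ineq]) (simp add: cyy)
  then have y0: "y = 0" using cyy by simp
  then have eu: "A *v u = (u \<bullet> (A *v u)) *\<^sub>R u" unfolding y_def l_def f_def by simp
  have uV: "u \<notin> V"
  proof
    assume "u \<in> V" then have "u \<bullet> u = 0" using uW unfolding W_def by auto
    with uu show False by simp
  qed
  have "ONE A (insert u V)"
    unfolding ONE_def
  proof (intro conjI)
    show "finite (insert u V)" using fin by simp
    show "pairwise orthogonal (insert u V)"
      using po uW unfolding W_def by (auto simp: pairwise_insert orthogonal_def inner_commute)
    show "\<forall>v\<in>insert u V. norm v = 1 \<and> A *v v = (v \<bullet> (A *v v)) *\<^sub>R v"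
    proof
      fix v assume "v \<in> insert u V"
      then show "norm v = 1 \<and> A *v v = (v \<bullet> (A *v v)) *\<^sub>R v"
      proof
        assume "v = u" then show ?thesis using un eu by simp
      qed (use nv ev in blast)
    qed
  qed
  with uV show ?thesis by blast
qed



lemma spec_full:
  fixes A :: "real^'n^'n"
  assumes As: "transpose A = A"
  shows "\<exists>V. ONE A V \<and> span V = UNIV"
proof -
  have "k \<le> DIM(real^'n) \<Longrightarrow> \<exists>V. ONE A V \<and> card V = k" for k
  proof (induction k)
    case 0 show ?case by (rule exI[of _ "{}"]) (simp add: ONE_def)
  next
    case (Suc k)
    then obtain V where V: "ONE A V" "card V = k" by auto
    then obtain u where "u \<notin> V" "ONE A (insert u V)" using spec_step[OF As V(1)] Suc.prems by auto
    then show ?case using V by (intro exI[of _ "insert u V"]) (auto simp: ONE_def)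
  qed
  then obtain V where V: "ONE A V" "card V = DIM(real^'n)" by blast
  then have "span V = UNIV" using test_dimfull[OF ONE_indep[OF V(1)]] by simp
  with V show ?thesis by blast
qed

lemma sym_from_inner:
  fixes B :: "real^'n^'n"
  assumes "\<And>x y. (B *v x) \<bullet> y = x \<bullet> (B *v y)"
  shows "transpose B = B"
proof -
  have col: "(B *v axis j 1) $ i = B $ i $ j" for i j
    by (simp add: matrix_vector_mult_def axis_def if_distrib cong: if_cong)
  show ?thesis
  proof (simp add: vec_eq_iff transpose_def, intro allI)
    fix i j
    have "(B *v axis i 1) \<bullet> axis j 1 = axis i 1 \<bullet> (B *v axis j 1)" by (rule assms)
    then show "B $ j $ i = B $ i $ j" by (simp add: inner_axis inner_axis' col)
  qed
qed



lemma mv_sum_scale: "(A::real^'n^'n) *v (\<Sum>v\<in>V. c v *\<^sub>R v) = (\<Sum>v\<in>V. c v *\<^sub>R (A *v v))"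
  by (induction V rule: infinite_finite_induct) (simp_all add: matrix_vector_right_distrib matrix_vector_mult_scaleR)

lemma msqrt_full:
  fixes A :: "real^'n^'n"
  assumes pd: "pos_def_matrix A"
  shows "pos_semidef_matrix (matrix_sqrt A) \<and> matrix_sqrt A ** matrix_sqrt A = A"
proof -
  have As: "transpose A = A" and pos: "\<And>x. x \<noteq> 0 \<Longrightarrow> x \<bullet> (A *v x) > 0"
    using pd unfolding pos_def_matrix_def sym_matrix_def by auto
  obtain V where V: "ONE A V" and sp: "span V = UNIV" using spec_full[OF As] by blast
  have fin: "finite V" and po: "pairwise orthogonal V" and nv: "\<And>v. v \<in> V \<Longrightarrow> norm v = 1"
    and ev: "\<And>v. v \<in> V \<Longrightarrow> A *v v = (v \<bullet> (A *v v)) *\<^sub>R v"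
    using V unfolding ONE_def by auto
  define lam where "lam = (\<lambda>v. v \<bullet> (A *v v))"
  have ev': "A *v v = lam v *\<^sub>R v" if "v \<in> V" for v using ev[OF that] unfolding lam_def .
  have lpos: "lam v > 0" if "v \<in> V" for v
    unfolding lam_def using nv[OF that] pos[of v] by (metis norm_zero zero_neq_one)
  have orth: "v \<bullet> w = (if v = w then 1 else 0)" if "v \<in> V" "w \<in> V" for v w
  proof (cases "v = w")
    case True then show ?thesis using nv[OF that(1)] by (simp add: norm_eq_sqrt_inner)
  next
    case False then show ?thesis using po that by (auto simp: pairwise_def orthogonal_def)
  qed
  have expand: "x = (\<Sum>v\<in>V. (x \<bullet> v) *\<^sub>R v)" for x
    using orthonormal_basis_expand[OF po nv _ fin, of x] sp by simp
  have sumdelta: "(\<Sum>w\<in>V. g w * (w \<bullet> v)) = g v" if "v \<in> V" for g v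
  proof -
    have "(\<Sum>w\<in>V. g w * (w \<bullet> v)) = (\<Sum>w\<in>V. if w = v then g v else 0)"
      by (rule sum.cong) (auto simp: orth[OF _ that])
    also have "\<dots> = g v" using fin that by simp
    finally show ?thesis .
  qed
  have Amul: "A *v (\<Sum>v\<in>V. c v *\<^sub>R v) = (\<Sum>v\<in>V. (c v * lam v) *\<^sub>R v)" for c
  proof -
    have "A *v (\<Sum>v\<in>V. c v *\<^sub>R v) = (\<Sum>v\<in>V. c v *\<^sub>R (A *v v))"
      by (rule mv_sum_scale)
    also have "\<dots> = (\<Sum>v\<in>V. (c v * lam v) *\<^sub>R v)" by (rule sum.cong) (auto simp: ev')
    finally show ?thesis .
  qed
  define Bf where "Bf = (\<lambda>x. \<Sum>v\<in>V. (sqrt (lam v) * (x \<bullet> v)) *\<^sub>R v)"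
  have lin: "linear Bf"
    by (rule linearI) (simp_all add: Bf_def inner_add_left distrib_left scaleR_add_left sum.distrib scaleR_right.sum mult.left_commute)
  define B where "B = matrix Bf"
  have Bv: "B *v x = Bf x" for x unfolding B_def using matrix_vector_mul(2)[OF lin] by metis
  have Bin: "(Bf x) \<bullet> y = (\<Sum>v\<in>V. sqrt (lam v) * (x \<bullet> v) * (v \<bullet> y))" for x y
    unfolding Bf_def by (simp add: inner_sum_left mult.assoc)
  have Bsym: "transpose B = B"
  proof (rule sym_from_inner)
    fix x y
    have "(B *v x) \<bullet> y = (\<Sum>v\<in>V. sqrt (lam v) * (x \<bullet> v) * (v \<bullet> y))" by (simp add: Bv Bin)
    also have "\<dots> = (\<Sum>v\<in>V. sqrt (lam v) * (y \<bullet> v) * (v \<bullet> x))"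
      by (intro sum.cong refl) (simp add: inner_commute)
    also have "\<dots> = (B *v y) \<bullet> x" by (simp add: Bv Bin)
    also have "\<dots> = x \<bullet> (B *v y)" by (rule inner_commute)
    finally show "(B *v x) \<bullet> y = x \<bullet> (B *v y)" .
  qed
  have Bpsd: "x \<bullet> (B *v x) \<ge> 0" for x
  proof -
    have "x \<bullet> (B *v x) = (\<Sum>v\<in>V. sqrt (lam v) * (x \<bullet> v) * (v \<bullet> x))"
      by (subst inner_commute) (simp add: Bv Bin)
    also have "\<dots> = (\<Sum>v\<in>V. sqrt (lam v) * (x \<bullet> v)\<^sup>2)"
      by (intro sum.cong refl) (simp add: inner_commute power2_eq_square)
    also have "\<dots> \<ge> 0" using lpos by (intro sum_nonneg) (simp add: less_imp_le)
    finally show ?thesis .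
  qed
  have BB: "B ** B = A"
  proof (subst matrix_eq, intro allI)
    fix x
    have vB: "(Bf x) \<bullet> v = sqrt (lam v) * (x \<bullet> v)" if "v \<in> V" for v
    proof -
      have "(Bf x) \<bullet> v = (\<Sum>w\<in>V. (sqrt (lam w) * (x \<bullet> w)) * (w \<bullet> v))"
        by (rule Bin)
      also have "\<dots> = sqrt (lam v) * (x \<bullet> v)" by (rule sumdelta[OF that])
      finally show ?thesis .
    qed
    have "(B ** B) *v x = Bf (Bf x)" by (simp add: matrix_vector_mul_assoc[symmetric] Bv)
    also have "\<dots> = (\<Sum>v\<in>V. (sqrt (lam v) * (Bf x \<bullet> v)) *\<^sub>R v)"
      by (simp only: Bf_def[THEN fun_cong, of "Bf x"])
    also have "\<dots> = (\<Sum>v\<in>V. (x \<bullet> v * lam v) *\<^sub>R v)"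
      using lpos by (intro sum.cong refl) (simp add: vB less_imp_le)
    also have "\<dots> = A *v x" by (subst (2) expand) (simp add: Amul)
    finally show "(B ** B) *v x = A *v x" .
  qed
  have uniq: "C = B" if C: "pos_semidef_matrix C" "C ** C = A" for C
  proof -
    have Cs: "transpose C = C" and Cp: "\<And>x. x \<bullet> (C *v x) \<ge> 0"
      using C(1) unfolding pos_semidef_matrix_def sym_matrix_def by auto
    have Cv: "C *v v = sqrt (lam v) *\<^sub>R v" if v: "v \<in> V" for v
    proof -
      define mu where "mu = sqrt (lam v)"
      have mup: "mu > 0" unfolding mu_def using lpos[OF v] by simp
      define y where "y = C *v v - mu *\<^sub>R v"
      have "C *v y = C *v (C *v v) - mu *\<^sub>R (C *v v)"
        by (simp add: y_def matrix_vector_mult_diff_distrib matrix_vector_mult_scaleR)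
      also have "C *v (C *v v) = lam v *\<^sub>R v"
        using C(2) ev'[OF v] by (simp add: matrix_vector_mul_assoc)
      also have "lam v = mu * mu" unfolding mu_def using lpos[OF v] by simp
      finally have Cy: "C *v y = (- mu) *\<^sub>R y"
        by (simp add: y_def algebra_simps)
      have "0 \<le> y \<bullet> (C *v y)" by (rule Cp)
      also have "\<dots> = - mu * (y \<bullet> y)" by (simp add: Cy)
      finally have "y \<bullet> y \<le> 0" using mup by (simp add: mult_le_0_iff)
      then have "y = 0" by (metis inner_eq_zero_iff inner_ge_zero order_antisym)
      then show ?thesis unfolding y_def mu_def by simp
    qed
    show ?thesis
    proof (subst matrix_eq, intro allI)
      fix x
      have "C *v x = C *v (\<Sum>v\<in>V. (x \<bullet> v) *\<^sub>R v)" by (subst expand) simp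
      also have "\<dots> = (\<Sum>v\<in>V. (x \<bullet> v) *\<^sub>R (C *v v))"
        by (rule mv_sum_scale)
      also have "\<dots> = Bf x" unfolding Bf_def by (intro sum.cong refl) (simp add: Cv mult.commute)
      finally show "C *v x = B *v x" by (simp add: Bv)
    qed
  qed
  have Bpsd': "pos_semidef_matrix B" unfolding pos_semidef_matrix_def sym_matrix_def using Bsym Bpsd by auto
  have "matrix_sqrt A = B"
    unfolding matrix_sqrt_def
  proof (rule the_equality)
    show "pos_semidef_matrix B \<and> B ** B = A" using Bpsd' BB by simp
    fix C assume "pos_semidef_matrix C \<and> C ** C = A"
    then show "C = B" using uniq by blast
  qed
  then show ?thesis using Bpsd' BB by simp
qed

lemma msqrt: assumes "pos_def_matrix (A::real^'n^'n)"
  shows "transpose (matrix_sqrt A) = matrix_sqrt A" "matrix_sqrt A ** matrix_sqrt A = A"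
  using msqrt_full[OF assms] unfolding pos_semidef_matrix_def sym_matrix_def by auto



lemma mv_comp: "(B *v x) $ i = (\<Sum>j\<in>UNIV. B $ i $ j * x $ j)"
  by (simp add: matrix_vector_mult_def)

lemma inner_comp: "(x::real^'n) \<bullet> y = (\<Sum>i\<in>UNIV. x $ i * y $ i)"
  by (simp add: inner_vec_def)

lemma sym_inner: assumes "transpose B = (B::real^'n^'n)"
  shows "(B *v x) \<bullet> y = x \<bullet> (B *v y)"
proof -
  have "B *v x = x v* B" using transpose_matrix_vector[of B x] assms by simp
  then show ?thesis by (simp add: dot_lmul_matrix)
qed

lemma quad_sqrt: assumes "transpose B = (B::real^'n^'n)" "B ** B = A"
  shows "x \<bullet> (A *v x) = (B *v x) \<bullet> (B *v x)"
  using assms by (simp add: sym_inner matrix_vector_mul_assoc)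

lemma vec_nth_meas[measurable]: "(\<lambda>x::real^'n. x $ i) \<in> borel_measurable borel"
  by (intro borel_measurable_continuous_onI continuous_intros)

lemma lpnorm_meas[measurable]: "(\<lambda>g::real^'n. lpnorm p (B *v g)) \<in> borel_measurable borel"
  unfolding lpnorm_def mv_comp by measurable

lemma vec_meas: assumes "\<And>i. (\<lambda>\<omega>. X \<omega> $ i) \<in> borel_measurable M"
  shows "(X :: _ \<Rightarrow> real^'n) \<in> borel_measurable M"
  using assms by (subst borel_measurable_euclidean_space) (auto simp: Basis_vec_def inner_axis)



lemma Q_side:
  fixes M :: "'a measure" and X :: "'a \<Rightarrow> real^'n"
    and N :: "'b measure" and G :: "'b \<Rightarrow> real^'n" and B :: "real^'n^'n"
  assumes PM: "prob_space M"
    and indX: "prob_space.indep_vars M (\<lambda>_. borel) (\<lambda>i \<omega>. X \<omega> $ i) UNIV"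
    and stab: "\<And>i. is_stab_sym \<alpha> \<sigma> (distr M borel (\<lambda>\<omega>. X \<omega> $ i))"
    and PN: "prob_space N"
    and indG: "prob_space.indep_vars N (\<lambda>_. borel) (\<lambda>i \<omega>. G \<omega> $ i) UNIV"
    and gau: "\<And>i. distributed N lborel (\<lambda>\<omega>. G \<omega> $ i) std_normal_density"
    and Bs: "transpose B = B" and s: "0 \<le> s"
  shows "(LINT \<omega>|M. exp (- s * ((B *v X \<omega>) \<bullet> (B *v X \<omega>))))
      = (LINT \<eta>|N. exp (- (\<sigma> powr \<alpha>) * (sqrt (2 * s) powr \<alpha>) * (\<Sum>i\<in>UNIV. \<bar>(B *v G \<eta>) $ i\<bar> powr \<alpha>)))"
proof -
  interpret M: prob_space M by fact
  interpret N: prob_space N by fact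
  interpret MN: pair_prob_space M N ..
  have Xm[measurable]: "(\<lambda>\<omega>. X \<omega> $ i) \<in> borel_measurable M" for i
    using indX unfolding M.indep_vars_def by auto
  have Gm[measurable]: "(\<lambda>\<omega>. G \<omega> $ i) \<in> borel_measurable N" for i
    using indG unfolding N.indep_vars_def by auto
  define t where "t = sqrt (2 * s)"
  define F where "F = (\<lambda>\<omega> \<eta>. iexp (t * (\<Sum>i\<in>UNIV. (B *v X \<omega>) $ i * G \<eta> $ i)))"
  have F2: "F \<omega> \<eta> = iexp (t * (\<Sum>i\<in>UNIV. (B *v G \<eta>) $ i * X \<omega> $ i))" for \<omega> \<eta>
  proof -
    have "(\<Sum>i\<in>UNIV. (B *v X \<omega>) $ i * G \<eta> $ i) = (B *v X \<omega>) \<bullet> G \<eta>" by (simp add: inner_comp)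
    also have "\<dots> = X \<omega> \<bullet> (B *v G \<eta>)" by (rule sym_inner[OF Bs])
    also have "\<dots> = (\<Sum>i\<in>UNIV. (B *v G \<eta>) $ i * X \<omega> $ i)" by (simp add: inner_comp mult.commute)
    finally show ?thesis unfolding F_def by simp
  qed
  have in1: "complex_of_real (exp (- s * ((B *v X \<omega>) \<bullet> (B *v X \<omega>)))) = (CLINT \<eta>|N. F \<omega> \<eta>)" for \<omega>
    unfolding F_def gauss_char[OF PN indG gau] using s by (simp add: t_def)
  have in2: "(CLINT \<omega>|M. F \<omega> \<eta>) = complex_of_real (exp (- (\<sigma> powr \<alpha>) * (sqrt (2 * s) powr \<alpha>) * (\<Sum>i\<in>UNIV. \<bar>(B *v G \<eta>) $ i\<bar> powr \<alpha>)))" for \<eta>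
    unfolding F2 stab_char[OF PM indX stab] using s by (simp add: t_def)
  have Fm: "(\<lambda>p. F (fst p) (snd p)) \<in> borel_measurable (M \<Otimes>\<^sub>M N)"
    unfolding F_def mv_comp by measurable
  have Fint: "integrable (M \<Otimes>\<^sub>M N) (case_prod F)"
    by (rule MN.P.integrable_const_bound[where B=1]) (use Fm in \<open>auto simp: split_beta' F_def norm_exp_i_times\<close>)
  have "complex_of_real (LINT \<omega>|M. exp (- s * ((B *v X \<omega>) \<bullet> (B *v X \<omega>))))
      = (CLINT \<omega>|M. CLINT \<eta>|N. F \<omega> \<eta>)"
    by (simp add: in1[symmetric])
  also have "\<dots> = (CLINT \<eta>|N. CLINT \<omega>|M. F \<omega> \<eta>)"
    by (rule MN.Fubini_integral[symmetric, OF Fint])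
  also have "\<dots> = complex_of_real (LINT \<eta>|N. exp (- (\<sigma> powr \<alpha>) * (sqrt (2 * s) powr \<alpha>) * (\<Sum>i\<in>UNIV. \<bar>(B *v G \<eta>) $ i\<bar> powr \<alpha>)))"
    by (simp add: in2)
  finally show ?thesis by simp
qed



lemma R_side:
  fixes N :: "'b measure" and G :: "'b \<Rightarrow> real^'n" and S :: "'b \<Rightarrow> real" and B :: "real^'n^'n"
  assumes a: "0 < \<alpha>" "\<alpha> < 2" "0 < \<sigma>"
    and PN: "prob_space N"
    and Gm[measurable]: "G \<in> borel_measurable N" and Sm[measurable]: "S \<in> borel_measurable N"
    and ind: "\<And>U V. U \<in> sets borel \<Longrightarrow> V \<in> sets borel \<Longrightarrow>
           measure N {\<omega>\<in>space N. G \<omega> \<in> U \<and> S \<omega> \<in> V}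
             = measure N {\<omega>\<in>space N. G \<omega> \<in> U} * measure N {\<omega>\<in>space N. S \<omega> \<in> V}"
    and stp: "is_stab_pos (\<alpha> / 2) (2 * \<sigma>\<^sup>2 * v_const (\<alpha> / 2) powr (- 2 / \<alpha>)) (distr N borel S)"
    and s: "0 \<le> s"
  shows "(LINT \<eta>|N. exp (- s * ((lpnorm \<alpha> (B *v G \<eta>))\<^sup>2 * S \<eta>)))
      = (LINT \<eta>|N. exp (- (\<sigma> powr \<alpha>) * (sqrt (2 * s) powr \<alpha>) * (\<Sum>i\<in>UNIV. \<bar>(B *v G \<eta>) $ i\<bar> powr \<alpha>)))"
proof -
  interpret N: prob_space N by fact
  let ?v = "v_const (\<alpha> / 2)"
  let ?sS = "2 * \<sigma>\<^sup>2 * ?v powr (- 2 / \<alpha>)"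
  have vpos: "?v > 0"
  proof -
    have "sin (pi * (\<alpha> / 2) / 2) > 0" using a by (intro sin_gt_zero) (auto simp: field_simps)
    moreover have "Gamma (1 - \<alpha> / 2) > 0" "Gamma (\<alpha> / 2) > 0" using a by (auto intro!: Gamma_real_pos)
    ultimately show ?thesis unfolding v_const_def by (simp add: pi_gt_zero)
  qed
  define L where "L = (\<lambda>g. lpnorm \<alpha> (B *v g))"
  have Lm[measurable]: "L \<in> borel_measurable borel" unfolding L_def by measurable
  have L0: "L g \<ge> 0" for g unfolding L_def lpnorm_def by simp
  have Lpow: "(L g) powr \<alpha> = (\<Sum>i\<in>UNIV. \<bar>(B *v g) $ i\<bar> powr \<alpha>)" for g
    unfolding L_def lpnorm_def using a by (simp add: powr_powr sum_nonneg)
  define D where "D = distr N borel S"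
  define GG where "GG = distr N borel G"
  have D: "real_distribution D" unfolding D_def
    by (rule real_distribution.intro, rule N.prob_space_distr) (auto simp: real_distribution_axioms_def)
  interpret D: real_distribution D by (rule D)
  have GG: "prob_space GG" unfolding GG_def by (rule N.prob_space_distr) simp
  interpret GG: prob_space GG by (rule GG)
  have m0: "measure D {..<0} = 0" and lap: "\<And>t. t \<ge> 0 \<Longrightarrow> (LINT x|D. exp (- t * x)) = exp (- (?sS powr (\<alpha>/2)) * (t powr (\<alpha>/2)) * ?v)"
    using stp unfolding is_stab_pos_def D_def by auto
  have AED: "AE x in D. 0 \<le> x"
  proof -
    have "{..<0::real} \<in> null_sets D" using m0 by (simp add: D.emeasure_eq_measure null_sets_def)
    then have "AE x in D. x \<notin> {..<0::real}" by (rule AE_not_in)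
    then show ?thesis by (auto elim: eventually_mono)
  qed
  have AEN: "AE \<eta> in N. 0 \<le> S \<eta>" using AED unfolding D_def by (subst (asm) AE_distr_iff) auto
  define h where "h = (\<lambda>p::(real^'n) \<times> real. exp (- s * (L (fst p))\<^sup>2 * max (snd p) 0))"
  have hm[measurable]: "h \<in> borel_measurable (borel \<Otimes>\<^sub>M borel)" unfolding h_def by measurable
  have hb: "\<bar>h p\<bar> \<le> 1" for p
    unfolding h_def using s by (auto simp: mult_nonneg_nonneg)
  have pairEq: "GG \<Otimes>\<^sub>M D = distr N (borel \<Otimes>\<^sub>M borel) (\<lambda>\<eta>. (G \<eta>, S \<eta>))"
  proof (rule pair_measure_eqI)
    show "sigma_finite_measure GG" by (rule prob_space_imp_sigma_finite[OF GG])
    show "sigma_finite_measure D" by (rule prob_space_imp_sigma_finite[OF D.prob_space_axioms])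
    show "sets (GG \<Otimes>\<^sub>M D) = sets (distr N (borel \<Otimes>\<^sub>M borel) (\<lambda>\<eta>. (G \<eta>, S \<eta>)))"
      unfolding GG_def D_def by simp
    fix U V assume U: "U \<in> sets GG" and V: "V \<in> sets D"
    then have U': "U \<in> sets borel" and V': "V \<in> sets borel" unfolding GG_def D_def by auto
    have "emeasure GG U * emeasure D V = ennreal (measure N {\<omega>\<in>space N. G \<omega> \<in> U}) * ennreal (measure N {\<omega>\<in>space N. S \<omega> \<in> V})"
      unfolding GG_def D_def using U' V'
      by (simp add: emeasure_distr N.emeasure_eq_measure Int_def conj_commute)
    also have "\<dots> = ennreal (measure N {\<omega>\<in>space N. G \<omega> \<in> U \<and> S \<omega> \<in> V})"
      by (simp add: ind[OF U' V'] ennreal_mult)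
    also have "\<dots> = emeasure (distr N (borel \<Otimes>\<^sub>M borel) (\<lambda>\<eta>. (G \<eta>, S \<eta>))) (U \<times> V)"
      using U' V' by (simp add: emeasure_distr N.emeasure_eq_measure Int_def conj_commute)
    finally show "emeasure GG U * emeasure D V = emeasure (distr N (borel \<Otimes>\<^sub>M borel) (\<lambda>\<eta>. (G \<eta>, S \<eta>))) (U \<times> V)" .
  qed
  interpret GD: pair_prob_space GG D ..
  have hint: "integrable (GG \<Otimes>\<^sub>M D) h"
  proof (rule GD.P.integrable_const_bound[where B=1])
    show "h \<in> borel_measurable (GG \<Otimes>\<^sub>M D)"
    proof -
      have "(borel_measurable (GG \<Otimes>\<^sub>M D) :: (_ \<Rightarrow> real) set) = borel_measurable (borel \<Otimes>\<^sub>M borel)"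
        by (rule measurable_cong_sets) (simp_all add: GG_def D_def)
      then show ?thesis using hm by simp
    qed
  qed (auto simp: hb)
  have inner: "(LINT x|D. h (g, x)) = exp (- (\<sigma> powr \<alpha>) * (sqrt (2 * s) powr \<alpha>) * (\<Sum>i\<in>UNIV. \<bar>(B *v g) $ i\<bar> powr \<alpha>))" for g
  proof -
    have "(LINT x|D. h (g, x)) = (LINT x|D. exp (- (s * (L g)\<^sup>2) * x))"
    proof (rule integral_cong_AE)
      show "AE x in D. h (g, x) = exp (- (s * (L g)\<^sup>2) * x)"
        using AED by eventually_elim (simp add: h_def max_def)
    qed auto
    also have "\<dots> = exp (- (?sS powr (\<alpha>/2)) * ((s * (L g)\<^sup>2) powr (\<alpha>/2)) * ?v)"
      by (rule lap) (use s in simp)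
    also have "- (?sS powr (\<alpha>/2)) * ((s * (L g)\<^sup>2) powr (\<alpha>/2)) * ?v = - (\<sigma> powr \<alpha>) * (sqrt (2 * s) powr \<alpha>) * (\<Sum>i\<in>UNIV. \<bar>(B *v g) $ i\<bar> powr \<alpha>)"
      using arith_powr[of \<alpha> \<sigma> ?v s "L g" "\<Sum>i\<in>UNIV. \<bar>(B *v g) $ i\<bar> powr \<alpha>", OF a(1) a(3) vpos s L0 Lpow] by simp
    finally show ?thesis .
  qed
  have "(LINT \<eta>|N. exp (- s * ((lpnorm \<alpha> (B *v G \<eta>))\<^sup>2 * S \<eta>))) = (LINT \<eta>|N. h (G \<eta>, S \<eta>))"
  proof (rule integral_cong_AE)
    show "AE \<eta> in N. exp (- s * ((lpnorm \<alpha> (B *v G \<eta>))\<^sup>2 * S \<eta>)) = h (G \<eta>, S \<eta>)"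
      using AEN by eventually_elim (simp add: h_def L_def max_def)
  qed (auto simp: h_def L_def)
  also have "\<dots> = integral\<^sup>L (distr N (borel \<Otimes>\<^sub>M borel) (\<lambda>\<eta>. (G \<eta>, S \<eta>))) h"
    by (rule integral_distr[symmetric]) auto
  also have "\<dots> = integral\<^sup>L (GG \<Otimes>\<^sub>M D) h" by (simp add: pairEq)
  also have "\<dots> = (LINT g|GG. LINT x|D. h (g, x))" by (rule GD.integral_fst'[symmetric, OF hint])
  also have "\<dots> = (LINT g|GG. exp (- (\<sigma> powr \<alpha>) * (sqrt (2 * s) powr \<alpha>) * (\<Sum>i\<in>UNIV. \<bar>(B *v g) $ i\<bar> powr \<alpha>)))"
    by (simp add: inner)
  also have "\<dots> = (LINT \<eta>|N. exp (- (\<sigma> powr \<alpha>) * (sqrt (2 * s) powr \<alpha>) * (\<Sum>i\<in>UNIV. \<bar>(B *v G \<eta>) $ i\<bar> powr \<alpha>)))"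
    unfolding GG_def by (rule integral_distr) (auto simp: mv_comp)
  finally show ?thesis .
qed



theorem lemmaB1:
  fixes \<alpha> \<sigma> :: real
    and M :: "'a measure" and X :: "'a \<Rightarrow> real^'n"
    and N :: "'b measure" and G :: "'b \<Rightarrow> real^'n" and S :: "'b \<Rightarrow> real"
    and A :: "real^'n^'n"
  assumes "0 < \<alpha>" "\<alpha> < 2" "0 < \<sigma>"
    and "prob_space M"
    and "prob_space.indep_vars M (\<lambda>_. borel) (\<lambda>i \<omega>. X \<omega> $ i) UNIV"
    and "\<And>i. is_stab_sym \<alpha> \<sigma> (distr M borel (\<lambda>\<omega>. X \<omega> $ i))"
    and "pos_def_matrix A"
    and "prob_space N"
    and "prob_space.indep_vars N (\<lambda>_. borel) (\<lambda>i \<omega>. G \<omega> $ i) UNIV"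
    and "\<And>i. distributed N lborel (\<lambda>\<omega>. G \<omega> $ i) std_normal_density"
    and "G \<in> borel_measurable N" and "S \<in> borel_measurable N"
    and "\<And>U V. U \<in> sets borel \<Longrightarrow> V \<in> sets borel \<Longrightarrow>
           measure N {\<omega>\<in>space N. G \<omega> \<in> U \<and> S \<omega> \<in> V}
             = measure N {\<omega>\<in>space N. G \<omega> \<in> U} * measure N {\<omega>\<in>space N. S \<omega> \<in> V}"
    and "is_stab_pos (\<alpha> / 2) (2 * \<sigma>\<^sup>2 * v_const (\<alpha> / 2) powr (- 2 / \<alpha>)) (distr N borel S)"
  shows "distr M borel (\<lambda>\<omega>. X \<omega> \<bullet> (A *v X \<omega>))
       = distr N borel (\<lambda>\<omega>. (lpnorm \<alpha> (matrix_sqrt A *v G \<omega>))\<^sup>2 * S \<omega>)"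
proof -
  note a = assms
  interpret M: prob_space M by fact
  interpret N: prob_space N by fact
  define B where "B = matrix_sqrt A"
  have Bs: "transpose B = B" and BB: "B ** B = A" unfolding B_def using msqrt[OF a(7)] by auto
  have Xm[measurable]: "(\<lambda>\<omega>. X \<omega> $ i) \<in> borel_measurable M" for i
    using a(5) unfolding M.indep_vars_def by auto
  have Gm[measurable]: "G \<in> borel_measurable N" by fact
  have Sm[measurable]: "S \<in> borel_measurable N" by fact
  define Q where "Q = (\<lambda>\<omega>. X \<omega> \<bullet> (A *v X \<omega>))"
  define R where "R = (\<lambda>\<omega>. (lpnorm \<alpha> (B *v G \<omega>))\<^sup>2 * S \<omega>)"
  have Qeq: "Q \<omega> = (B *v X \<omega>) \<bullet> (B *v X \<omega>)" for \<omega>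
    unfolding Q_def by (rule quad_sqrt[OF Bs BB])
  have Qm[measurable]: "Q \<in> borel_measurable M"
    unfolding Q_def inner_comp mv_comp by measurable
  have Rm[measurable]: "R \<in> borel_measurable N"
    unfolding R_def by measurable
  have rd1: "real_distribution (distr M borel Q)"
    by (rule real_distribution.intro, rule M.prob_space_distr) (auto simp: real_distribution_axioms_def)
  have rd2: "real_distribution (distr N borel R)"
    by (rule real_distribution.intro, rule N.prob_space_distr) (auto simp: real_distribution_axioms_def)
  have AE1: "AE x in distr M borel Q. 0 \<le> x"
    by (subst AE_distr_iff) (auto simp: Qeq)
  have AEN: "AE \<eta> in N. 0 \<le> S \<eta>"
  proof -
    have m0: "measure (distr N borel S) {..<0} = 0" using a(14) unfolding is_stab_pos_def by auto
    interpret D: prob_space "distr N borel S" by (rule N.prob_space_distr) simp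
    have "{..<0::real} \<in> null_sets (distr N borel S)" using m0 by (simp add: D.emeasure_eq_measure null_sets_def)
    then have "AE x in distr N borel S. x \<notin> {..<0::real}" by (rule AE_not_in)
    then have "AE x in distr N borel S. 0 \<le> x" by (auto elim: eventually_mono)
    then show ?thesis by (subst (asm) AE_distr_iff) auto
  qed
  have AE2: "AE x in distr N borel R. 0 \<le> x"
    by (subst AE_distr_iff) (use AEN in \<open>auto simp: R_def elim!: eventually_mono\<close>)
  have L: "(LINT x|distr M borel Q. exp (- real k * x)) = (LINT x|distr N borel R. exp (- real k * x))" for k :: nat
  proof -
    have "(LINT x|distr M borel Q. exp (- real k * x)) = (LINT \<omega>|M. exp (- real k * ((B *v X \<omega>) \<bullet> (B *v X \<omega>))))"
      by (subst integral_distr) (auto simp: Qeq)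
    also have "\<dots> = (LINT \<eta>|N. exp (- (\<sigma> powr \<alpha>) * (sqrt (2 * real k) powr \<alpha>) * (\<Sum>i\<in>UNIV. \<bar>(B *v G \<eta>) $ i\<bar> powr \<alpha>)))"
      by (rule Q_side[OF a(4,5,6,8,9,10) Bs]) simp
    also have "\<dots> = (LINT \<eta>|N. exp (- real k * R \<eta>))"
      unfolding R_def by (rule R_side[OF a(1,2,3,8,11,12,13,14), symmetric]) auto
    also have "\<dots> = (LINT x|distr N borel R. exp (- real k * x))"
      by (subst integral_distr) auto
    finally show ?thesis .
  qed
  have "distr M borel Q = distr N borel R"
    by (rule laplace_unique[OF rd1 rd2 AE1 AE2 L])
  then show ?thesis unfolding Q_def R_def B_def .
qed


end
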